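(* Let $I\subseteq\mathbb K[x,y,z]$ be a good ideal with $\mu_1=x^{d_1},\mu_2=y^{d_2},\mu_3=z^{d_3}\in G(I)$. (i) If $I=\langle\mu_1,\mu_2,\mu_3\rangle$, then $I^2$ is good and $I^k$ is bad for every integer $k\ge3$. (ii) If $|G(I)|>3$, then $I^k$ is bad for every integer $k\ge2$.
   Context: Let $\mathbb K$ be a field, $R=\mathbb K[x_1,\dots,x_n]$ (here $n=3$), $\mathfrak m=\langle x_1,\dots,x_n\rangle$, $\mathbb N=\{0,1,2,\dots\}$. A monomial $x_1^{\alpha_1}\cdots x_n^{\alpha_n}$ is identified with the point $(\alpha_1,\dots,\alpha_n)\in\mathbb N^n$. For a monomial ideal $I$, $G(I)$ denotes its (unique) minimal monomial generating set. If $I$ is an $\mathfrak m$-primary monomial ideal, then for each $i$ there is a unique $d_i\ge1$ with $x_i^{d_i}\in G(I)$; write $\mu_i=x_i^{d_i}$. For $(a_1,\dots,a_n)\in\mathbb N^n$ the box associated to $I$ is $B_{a_1,\dots,a_n}=([a_1d_1,(a_1+1)d_1]\times\cdots\times[a_nd_n,(a_n+1)d_n])\cap\mathbb N^n$; a monomial belongs to a box if its exponent vector does. An $\mathfrak m$-primary monomial ideal $I$ is called good if for every integer $l\ge1$, every element of $G(I^l)$ belongs to some box $B_{a_1,\dots,a_n}$ with $a_1+\dots+a_n=l-1$; otherwise bad. (Goodness of $I^k$ is defined with respect to its own pure powers $x_i^{kd_i}\in G(I^k)$.) *)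

theory Defs
  imports Main
begin

text \<open>Monomials of K[x,y,z] are identified with exponent vectors in N^3 (triples).
A monomial ideal is identified with the set of exponent vectors of the monomials it
contains (an upward-closed subset of N^3); the field K plays no role.\<close>

type_synonym mon = "nat \<times> nat \<times> nat"

definition cmp :: "mon \<Rightarrow> nat \<Rightarrow> nat" where
  "cmp p i = (if i = 0 then fst p else if i = 1 then fst (snd p) else snd (snd p))"

definition pure :: "nat \<Rightarrow> nat \<Rightarrow> mon" where
  "pure i d = (if i = 0 then (d, 0, 0) else if i = 1 then (0, d, 0) else (0, 0, d))"

definition madd :: "mon \<Rightarrow> mon \<Rightarrow> mon" where
  "madd p q = (fst p + fst q, fst (snd p) + fst (snd q), snd (snd p) + snd (snd q))"

text \<open>divisibility of monomials = componentwise order\<close>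
definition mle :: "mon \<Rightarrow> mon \<Rightarrow> bool" where
  "mle p q \<longleftrightarrow> (\<forall>i<3. cmp p i \<le> cmp q i)"

definition monideal :: "mon set \<Rightarrow> bool" where
  "monideal M \<longleftrightarrow> (\<forall>p q. p \<in> M \<longrightarrow> mle p q \<longrightarrow> q \<in> M)"

definition mprimary :: "mon set \<Rightarrow> bool" where
  "mprimary M \<longleftrightarrow> monideal M \<and> (0, 0, 0) \<notin> M \<and> (\<forall>i<3. \<exists>d. pure i d \<in> M)"

definition gens :: "mon set \<Rightarrow> mon set" where
  "gens M = {g \<in> M. \<forall>h \<in> M. mle h g \<longrightarrow> h = g}"

fun mpow :: "mon set \<Rightarrow> nat \<Rightarrow> mon set" where
  "mpow M 0 = UNIV"
| "mpow M (Suc l) = {madd a b | a b. a \<in> M \<and> b \<in> mpow M l}"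

definition pdeg :: "mon set \<Rightarrow> nat \<Rightarrow> nat" where
  "pdeg M i = (LEAST d. pure i d \<in> M)"

definition in_box :: "mon set \<Rightarrow> mon \<Rightarrow> mon \<Rightarrow> bool" where
  "in_box M a p \<longleftrightarrow> (\<forall>i<3. cmp a i * pdeg M i \<le> cmp p i \<and> cmp p i \<le> (cmp a i + 1) * pdeg M i)"

definition good :: "mon set \<Rightarrow> bool" where
  "good M \<longleftrightarrow> (\<forall>l\<ge>1. \<forall>g \<in> gens (mpow M l).
      \<exists>a. cmp a 0 + cmp a 1 + cmp a 2 = l - 1 \<and> in_box M a g)"

end

theory Submission imports Defs begin

lemma all3: "(\<forall>i<(3::nat). P i) \<longleftrightarrow> P 0 \<and> P 1 \<and> P 2"
  by (auto simp: numeral_3_eq_3 less_Suc_eq numeral_2_eq_2)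

lemma mle_iff: "mle p q \<longleftrightarrow> fst p \<le> fst q \<and> fst (snd p) \<le> fst (snd q) \<and> snd (snd p) \<le> snd (snd q)"
  by (simp add: mle_def all3 cmp_def)

lemma madd_comps[simp]: "fst (madd p q) = fst p + fst q"
  "fst (snd (madd p q)) = fst (snd p) + fst (snd q)"
  "snd (snd (madd p q)) = snd (snd p) + snd (snd q)"
  by (simp_all add: madd_def)

lemma madd_assoc: "madd (madd a b) c = madd a (madd b c)" by (simp add: madd_def)

lemma gens_below: assumes "p \<in> S" shows "\<exists>g\<in>gens S. mle g p"
proof -
  define s where "s = (\<lambda>q::mon. fst q + fst (snd q) + snd (snd q))"
  have "(\<lambda>h. h \<in> S \<and> mle h p) p" using assms by (auto simp: mle_iff)
  from ex_has_least_nat[of "\<lambda>h. h \<in> S \<and> mle h p", OF this, of s]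
  obtain g where g: "g \<in> S" "mle g p" "\<And>h. h\<in>S \<Longrightarrow> mle h p \<Longrightarrow> s g \<le> s h" by blast
  have "g \<in> gens S" unfolding gens_def
  proof (safe intro!: g(1))
    fix h assume "h \<in> S" "mle h g"
    moreover then have "mle h p" using g(2) by (auto simp: mle_iff)
    ultimately have "s g \<le> s h" using g(3) by blast
    with \<open>mle h g\<close> show "h = g" by (auto simp: mle_iff s_def prod_eq_iff)
  qed
  then show ?thesis using g(2) by blast
qed

lemma monidealD: "monideal M \<Longrightarrow> p \<in> M \<Longrightarrow> mle p q \<Longrightarrow> q \<in> M"
  unfolding monideal_def by blast

lemma mpow_monideal: "monideal M \<Longrightarrow> monideal (mpow M n)"
proof (induction n)
  case 0 then show ?case by (simp add: monideal_def)
next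
  case (Suc n)
  show ?case unfolding monideal_def
  proof (intro allI impI)
    fix p q assume "p \<in> mpow M (Suc n)" "mle p q"
    then obtain a b where ab: "p = madd a b" "a \<in> M" "b \<in> mpow M n" by auto
    define a' where "a' = (fst a + (fst q - fst p), fst (snd a) + (fst (snd q) - fst (snd p)), snd (snd a) + (snd (snd q) - snd (snd p)))"
    have "mle a a'" by (simp add: a'_def mle_iff)
    then have "a' \<in> M" using Suc.prems ab(2) unfolding monideal_def by blast
    moreover have "q = madd a' b" using \<open>mle p q\<close> ab(1) by (auto simp: a'_def mle_iff madd_def prod_eq_iff)
    ultimately show "q \<in> mpow M (Suc n)" using ab(3) by (simp only: mpow.simps) blast
  qed
qed

lemma mpow1: assumes "monideal M" shows "mpow M 1 = M"
proof
  show "mpow M 1 \<subseteq> M"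
  proof
    fix p assume "p \<in> mpow M 1"
    then obtain a b where "p = madd a b" "a \<in> M" by auto
    moreover have "mle a (madd a b)" by (simp add: mle_iff)
    ultimately show "p \<in> M" using assms unfolding monideal_def by blast
  qed
  show "M \<subseteq> mpow M 1"
  proof
    fix p assume "p \<in> M"
    moreover have "p = madd p (0,0,0)" by (simp add: madd_def)
    ultimately show "p \<in> mpow M 1" by (simp only: One_nat_def mpow.simps) blast
  qed
qed

lemma mpow_add: assumes "monideal M" "1 \<le> m"
  shows "mpow M (m+n) = {madd x y | x y. x \<in> mpow M m \<and> y \<in> mpow M n}"
  using assms(2)
proof (induction m)
  case 0 then show ?case by simp
next
  case (Suc m)
  show ?case
  proof (cases "m = 0")
    case True then show ?thesis using mpow1[OF assms(1)] by simp
  next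
    case False
    then have IH: "mpow M (m+n) = {madd x y | x y. x \<in> mpow M m \<and> y \<in> mpow M n}" using Suc by simp
    have "mpow M (Suc m + n) = {madd a b | a b. a \<in> M \<and> b \<in> mpow M (m+n)}" by simp
    also have "\<dots> = {madd a (madd x y) | a x y. a \<in> M \<and> x \<in> mpow M m \<and> y \<in> mpow M n}"
      unfolding IH by blast
    also have "\<dots> = {madd x y | x y. x \<in> mpow M (Suc m) \<and> y \<in> mpow M n}"
    proof (rule set_eqI, rule iffI)
      fix z assume "z \<in> {madd a (madd x y) | a x y. a \<in> M \<and> x \<in> mpow M m \<and> y \<in> mpow M n}"
      then obtain a x y where "z = madd a (madd x y)" "a \<in> M" "x \<in> mpow M m" "y \<in> mpow M n"
        by blast
      then have "z = madd (madd a x) y" "a \<in> M" "x \<in> mpow M m" "y \<in> mpow M n" by (simp_all add: madd_assoc)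
      then show "z \<in> {madd x y | x y. x \<in> mpow M (Suc m) \<and> y \<in> mpow M n}"
        by (simp only: mpow.simps) blast
    next
      fix z assume "z \<in> {madd x y | x y. x \<in> mpow M (Suc m) \<and> y \<in> mpow M n}"
      then obtain a x y where "z = madd (madd a x) y" "a \<in> M" "x \<in> mpow M m" "y \<in> mpow M n"
        by (simp only: mpow.simps) blast
      then have "z = madd a (madd x y)" "a \<in> M" "x \<in> mpow M m" "y \<in> mpow M n" by (simp_all add: madd_assoc)
      then show "z \<in> {madd a (madd x y) | a x y. a \<in> M \<and> x \<in> mpow M m \<and> y \<in> mpow M n}"
        by blast
    qed
    finally show ?thesis .
  qed
qed

lemma mpow_mpow: assumes "monideal M" "1 \<le> a"
  shows "mpow (mpow M a) b = mpow M (a*b)"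
proof (induction b)
  case 0 then show ?case by simp
next
  case (Suc b)
  then show ?case using mpow_add[OF assms, of "a*b"] by simp
qed

lemma mpow_madd: assumes "monideal M" "a \<in> mpow M m" "b \<in> mpow M n"
  shows "madd a b \<in> mpow M (m+n)"
proof (cases "m = 0")
  case True
  show ?thesis
  proof (cases "n = 0")
    case True then show ?thesis using \<open>m=0\<close> by simp
  next
    case False
    have "mle b (madd a b)" by (simp add: mle_iff)
    then have "madd a b \<in> mpow M n" using monidealD[OF mpow_monideal[OF assms(1)] assms(3)] by blast
    then show ?thesis using True by simp
  qed
next
  case False
  then have "madd a b \<in> {madd x y | x y. x \<in> mpow M m \<and> y \<in> mpow M n}" using assms(2,3) by blast
  then show ?thesis using mpow_add[OF assms(1), of m n] False by simp
qed

lemma pure_add: "pure i (a+b) = madd (pure i a) (pure i b)"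
  by (simp add: pure_def madd_def)

lemma pure_mult: "pure i d \<in> M \<Longrightarrow> pure i (k*d) \<in> mpow M k"
proof (induction k)
  case 0 then show ?case by simp
next
  case (Suc k)
  then show ?case unfolding mult_Suc pure_add by (simp only: mpow.simps) blast
qed

lemma madd_pure: "madd a b = pure i e \<Longrightarrow> i < 3 \<Longrightarrow>
   a = pure i (cmp a i) \<and> b = pure i (cmp b i) \<and> e = cmp a i + cmp b i"
  by (auto simp: pure_def madd_def cmp_def prod_eq_iff split: if_splits)

lemma pure_ge: "pure i e \<in> mpow M k \<Longrightarrow> i < 3 \<Longrightarrow> k * pdeg M i \<le> e"
proof (induction k arbitrary: e)
  case 0 then show ?case by simp
next
  case (Suc k)
  then obtain a b where ab: "pure i e = madd a b" "a \<in> M" "b \<in> mpow M k" by auto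
  from madd_pure[OF ab(1)[symmetric] Suc.prems(2)]
  have h: "a = pure i (cmp a i)" "b = pure i (cmp b i)" "e = cmp a i + cmp b i" by auto
  have "pdeg M i \<le> cmp a i" unfolding pdeg_def using ab(2) h(1) by (metis Least_le)
  moreover have "k * pdeg M i \<le> cmp b i" using Suc.IH[of "cmp b i"] ab(3) h(2) Suc.prems(2) by simp
  ultimately show ?case using h(3) by simp
qed

lemma pure_in: "mprimary M \<Longrightarrow> i < 3 \<Longrightarrow> pure i (pdeg M i) \<in> M"
  unfolding mprimary_def pdeg_def by (metis LeastI_ex)

lemma pdeg_mpow: assumes "mprimary M" "i < 3" shows "pdeg (mpow M k) i = k * pdeg M i"
  unfolding pdeg_def[of "mpow M k"]
proof (rule Least_equality)
  show "pure i (k * pdeg M i) \<in> mpow M k" using pure_mult pure_in[OF assms] by blast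
  show "\<And>y. pure i y \<in> mpow M k \<Longrightarrow> k * pdeg M i \<le> y" using pure_ge assms(2) by blast
qed

lemma pdeg_pos: assumes "mprimary M" "i < 3" shows "0 < pdeg M i"
proof (rule ccontr)
  assume "\<not> 0 < pdeg M i"
  then have "pure i 0 \<in> M" using pure_in[OF assms] by simp
  moreover have "pure i 0 = (0,0,0)" by (simp add: pure_def)
  ultimately show False using assms(1) by (simp add: mprimary_def)
qed


definition tri :: "mon set \<Rightarrow> nat \<Rightarrow> nat \<Rightarrow> nat \<Rightarrow> mon" where
  "tri M i j l = (i * pdeg M 0, j * pdeg M 1, l * pdeg M 2)"

lemma tri_in: assumes "mprimary M" shows "tri M i j l \<in> mpow M (i+j+l)"
proof -
  have mi: "monideal M" using assms by (simp add: mprimary_def)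
  have "tri M i j l = madd (pure 0 (i * pdeg M 0)) (madd (pure 1 (j * pdeg M 1)) (pure 2 (l * pdeg M 2)))"
    by (simp add: tri_def pure_def madd_def)
  moreover have "pure 0 (i * pdeg M 0) \<in> mpow M i" by (rule pure_mult, rule pure_in[OF assms]) simp
  moreover have "pure 1 (j * pdeg M 1) \<in> mpow M j" by (rule pure_mult, rule pure_in[OF assms]) simp
  moreover have "pure 2 (l * pdeg M 2) \<in> mpow M l" by (rule pure_mult, rule pure_in[OF assms]) simp
  ultimately have "tri M i j l \<in> mpow M (i+(j+l))" using mpow_madd[OF mi] by metis
  then show ?thesis by (simp add: add.assoc)
qed

lemma bad_crit:
  assumes mp: "mprimary M" and k: "1 \<le> k" and p: "p \<in> mpow M (2*k)"
    and lt: "\<forall>i<3. cmp p i < k * pdeg M i"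
  shows "\<not> good (mpow M k)"
proof
  assume gd: "good (mpow M k)"
  have mi: "monideal M" using mp by (simp add: mprimary_def)
  have eq: "mpow (mpow M k) 2 = mpow M (2*k)" using mpow_mpow[OF mi k, of 2] by (simp add: mult.commute)
  obtain g where g: "g \<in> gens (mpow M (2*k))" "mle g p" using gens_below[OF p] by blast
  have "\<exists>a. cmp a 0 + cmp a 1 + cmp a 2 = 2 - 1 \<and> in_box (mpow M k) a g"
    using gd[unfolded good_def, rule_format, of 2 g] g(1) eq by simp
  then obtain a where a: "cmp a 0 + cmp a 1 + cmp a 2 = 1" "in_box (mpow M k) a g" by auto
  have "\<exists>i<3. 1 \<le> cmp a i"
  proof -
    consider "1 \<le> cmp a 0" | "1 \<le> cmp a 1" | "1 \<le> cmp a 2" using a(1) by linarith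
    then show ?thesis
    proof cases
      case 1 thus ?thesis by (intro exI[of _ "0::nat"]) simp
    next
      case 2 thus ?thesis by (intro exI[of _ "1::nat"]) simp
    next
      case 3 thus ?thesis by (intro exI[of _ "2::nat"]) simp
    qed
  qed
  then obtain i where i: "i < 3" "1 \<le> cmp a i" by blast
  have "k * pdeg M i \<le> cmp a i * pdeg (mpow M k) i" using pdeg_mpow[OF mp i(1), of k] i(2) by simp
  also have "\<dots> \<le> cmp g i" using a(2) i unfolding in_box_def by auto
  also have "\<dots> \<le> cmp p i" using g(2) i unfolding mle_def by auto
  finally show False using lt i by auto
qed

lemma box_choice_aux:
  assumes h: "i + j + m = 2*(l::nat)" "1 \<le> l"
    and ei: "i = 2*qi + ri" "ri \<le> 1" and ej: "j = 2*qj + rj" "rj \<le> 1"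
    and em: "m = 2*qm + rm" "rm \<le> 1"
  shows "\<exists>a0 a1 a2. a0+a1+a2 = l-1 \<and> 2*a0 \<le> i \<and> i \<le> 2*a0+2 \<and> 2*a1 \<le> j \<and> j \<le> 2*a1+2
     \<and> 2*a2 \<le> m \<and> m \<le> 2*a2+2"
proof -
  have par: "ri + rj + rm = 0 \<or> ri + rj + rm = 2"
  proof -
    have e: "ri + rj + rm = 2*(l - (qi+qj+qm))" using h(1) ei ej em by simp
    moreover have "ri + rj + rm \<le> 3" using ei ej em by linarith
    ultimately have "l - (qi+qj+qm) \<le> 1" by linarith
    then have "l - (qi+qj+qm) = 0 \<or> l - (qi+qj+qm) = 1" by linarith
    then show ?thesis using e by auto
  qed
  show ?thesis
  proof (cases "ri + rj + rm = 2")
    case True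
    then show ?thesis using h ei ej em by (intro exI[of _ qi] exI[of _ qj] exI[of _ qm]) linarith
  next
    case False
    then have z: "ri = 0" "rj = 0" "rm = 0" using par by linarith+
    then have s: "qi + qj + qm = l" using h ei ej em by linarith
    consider "1 \<le> qi" | "1 \<le> qj" | "1 \<le> qm" using s h(2) by linarith
    then show ?thesis
    proof cases
      case 1 then show ?thesis using h ei ej em z s by (intro exI[of _ "qi-1"] exI[of _ qj] exI[of _ qm]) linarith
    next
      case 2 then show ?thesis using h ei ej em z s by (intro exI[of _ "qi"] exI[of _ "qj-1"] exI[of _ qm]) linarith
    next
      case 3 then show ?thesis using h ei ej em z s by (intro exI[of _ "qi"] exI[of _ qj] exI[of _ "qm-1"]) linarith
    qed
  qed
qed

lemma box_choice: "i + j + m = 2*(l::nat) \<Longrightarrow> 1 \<le> l \<Longrightarrow>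
  \<exists>a0 a1 a2. a0+a1+a2 = l-1 \<and> 2*a0 \<le> i \<and> i \<le> 2*a0+2 \<and> 2*a1 \<le> j \<and> j \<le> 2*a1+2
     \<and> 2*a2 \<le> m \<and> m \<le> 2*a2+2"
  by (rule box_choice_aux[of i j m l "i div 2" "i mod 2" "j div 2" "j mod 2" "m div 2" "m mod 2"]) auto

lemma box_mult: "2*a \<le> (c::nat) \<Longrightarrow> c \<le> 2*a+2 \<Longrightarrow> a*(2*d) \<le> c*d \<and> c*d \<le> (a+1)*(2*d)"
  using mult_le_mono1[of "2*a" c d] mult_le_mono1[of c "2*a+2" d] by (simp add: algebra_simps)

lemma mult_lt_aux: "1 \<le> (k::nat) \<Longrightarrow> x < d \<Longrightarrow> (k-1)*d + x < k*d"
  by (cases k) auto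


lemma mle_pure: "t < 3 \<Longrightarrow> e \<le> cmp g t \<Longrightarrow> mle (pure t e) g"
proof -
  assume "t < 3" "e \<le> cmp g t"
  moreover have "t = 0 \<or> t = 1 \<or> t = 2" using \<open>t < 3\<close> by arith
  ultimately show ?thesis by (auto simp: mle_iff pure_def cmp_def)
qed

lemma gen_lt: assumes "mprimary M" "g \<in> gens M" "t < 3" "g \<noteq> pure t (pdeg M t)"
  shows "cmp g t < pdeg M t"
proof (rule ccontr)
  assume "\<not> cmp g t < pdeg M t"
  then have "mle (pure t (pdeg M t)) g" using mle_pure[OF assms(3)] by simp
  moreover have "pure t (pdeg M t) \<in> M" using pure_in[OF assms(1,3)] .
  ultimately show False using assms(2,4) unfolding gens_def by blast
qed

lemma Mchar: assumes "gens M = {pure 0 (pdeg M 0), pure 1 (pdeg M 1), pure 2 (pdeg M 2)}" "p \<in> M"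
  shows "\<exists>t<3. mle (pure t (pdeg M t)) p"
proof -
  obtain g where "g \<in> gens M" "mle g p" using gens_below[OF assms(2)] by blast
  moreover have "g = pure 0 (pdeg M 0) \<or> g = pure 1 (pdeg M 1) \<or> g = pure 2 (pdeg M 2)"
    using \<open>g \<in> gens M\<close> assms(1) by blast
  ultimately show ?thesis
  proof (elim disjE)
    assume "mle g p" "g = pure 0 (pdeg M 0)" then show ?thesis by (intro exI[of _ "0::nat"]) simp
  next
    assume "mle g p" "g = pure 1 (pdeg M 1)" then show ?thesis by (intro exI[of _ "1::nat"]) simp
  next
    assume "mle g p" "g = pure 2 (pdeg M 2)" then show ?thesis by (intro exI[of _ "2::nat"]) simp
  qed
qed

lemma mpow_char: assumes "gens M = {pure 0 (pdeg M 0), pure 1 (pdeg M 1), pure 2 (pdeg M 2)}"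
  shows "p \<in> mpow M n \<Longrightarrow> \<exists>i j l. i+j+l = n \<and> mle (tri M i j l) p"
proof (induction n arbitrary: p)
  case 0 then show ?case by (intro exI[of _ 0]) (simp add: tri_def mle_iff)
next
  case (Suc n)
  then obtain a b where ab: "p = madd a b" "a \<in> M" "b \<in> mpow M n" by auto
  obtain i j l where ijl: "i+j+l = n" "mle (tri M i j l) b" using Suc.IH ab(3) by blast
  obtain t where t: "t < 3" "mle (pure t (pdeg M t)) a" using Mchar[OF assms ab(2)] by blast
  have "t = 0 \<or> t = 1 \<or> t = 2" using t(1) by arith
  then show ?case
  proof (elim disjE)
    assume "t = 0" then show ?case using t ijl ab(1)
      by (intro exI[of _ "Suc i"] exI[of _ j] exI[of _ l]) (auto simp: mle_iff tri_def pure_def)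
  next
    assume "t = 1" then show ?case using t ijl ab(1)
      by (intro exI[of _ i] exI[of _ "Suc j"] exI[of _ l]) (auto simp: mle_iff tri_def pure_def)
  next
    assume "t = 2" then show ?case using t ijl ab(1)
      by (intro exI[of _ i] exI[of _ j] exI[of _ "Suc l"]) (auto simp: mle_iff tri_def pure_def)
  qed
qed

lemma gens_tri: assumes "mprimary M" "gens M = {pure 0 (pdeg M 0), pure 1 (pdeg M 1), pure 2 (pdeg M 2)}"
   "g \<in> gens (mpow M n)"
  shows "\<exists>i j l. i+j+l = n \<and> g = tri M i j l"
proof -
  have "g \<in> mpow M n" using assms(3) by (simp add: gens_def)
  then obtain i j l where ijl: "i+j+l = n" "mle (tri M i j l) g" using mpow_char[OF assms(2)] by blast
  have "tri M i j l \<in> mpow M n" using tri_in[OF assms(1), of i j l] ijl(1) by simp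
  then have "tri M i j l = g" using assms(3) ijl(2) unfolding gens_def by blast
  then show ?thesis using ijl(1) by blast
qed

lemma card3: "card {a, b, c::'a} \<le> 3"
  by (auto simp: card_insert_if)

theorem mainTheorem15:
  fixes M :: "mon set"
  assumes "mprimary M" and "good M"
  shows "(gens M = {pure 0 (pdeg M 0), pure 1 (pdeg M 1), pure 2 (pdeg M 2)} \<longrightarrow>
            good (mpow M 2) \<and> (\<forall>k\<ge>3. \<not> good (mpow M k)))
       \<and> (card (gens M) > 3 \<longrightarrow> (\<forall>k\<ge>2. \<not> good (mpow M k)))"
proof (rule conjI; intro impI)
  have mi: "monideal M" using assms(1) by (simp add: mprimary_def)
  have d: "0 < pdeg M 0" "0 < pdeg M 1" "0 < pdeg M 2" using pdeg_pos[OF assms(1)] by auto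
  {
  assume G: "gens M = {pure 0 (pdeg M 0), pure 1 (pdeg M 1), pure 2 (pdeg M 2)}"
  show "good (mpow M 2) \<and> (\<forall>k\<ge>3. \<not> good (mpow M k))"
  proof
    show "good (mpow M 2)" unfolding good_def
    proof (intro allI impI ballI)
      fix l g assume l: "1 \<le> l" and g: "g \<in> gens (mpow (mpow M 2) l)"
      have "mpow (mpow M 2) l = mpow M (2*l)" using mpow_mpow[OF mi, of 2 l] by simp
      then have "g \<in> gens (mpow M (2*l))" using g by simp
      then obtain i j m where ijm: "i+j+m = 2*l" "g = tri M i j m" using gens_tri[OF assms(1) G] by blast
      obtain a0 a1 a2 where a: "a0+a1+a2 = l-1" "2*a0 \<le> i" "i \<le> 2*a0+2" "2*a1 \<le> j" "j \<le> 2*a1+2"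
        "2*a2 \<le> m" "m \<le> 2*a2+2" using box_choice[OF ijm(1) l] by blast
      show "\<exists>a. cmp a 0 + cmp a 1 + cmp a 2 = l - 1 \<and> in_box (mpow M 2) a g"
      proof (intro exI[of _ "(a0,a1,a2)"] conjI)
        show "cmp (a0,a1,a2) 0 + cmp (a0,a1,a2) 1 + cmp (a0,a1,a2) 2 = l-1" using a by (simp add: cmp_def)
        show "in_box (mpow M 2) (a0,a1,a2) g"
          unfolding in_box_def all3 using box_mult[of a0 i "pdeg M 0"] box_mult[of a1 j "pdeg M 1"]
            box_mult[of a2 m "pdeg M 2"] a ijm(2)
          by (simp add: cmp_def tri_def pdeg_mpow[OF assms(1)])
      qed
    qed
    show "\<forall>k\<ge>3. \<not> good (mpow M k)"
    proof (intro allI impI)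
      fix k :: nat assume k: "3 \<le> k"
      have eqk: "k - 1 + (k - 1) + 2 = 2*k" using k by simp
      have p: "tri M (k-1) (k-1) 2 \<in> mpow M (2*k)" using tri_in[OF assms(1), of "k-1" "k-1" 2] unfolding eqk .
      show "\<not> good (mpow M k)"
      proof (rule bad_crit[OF assms(1) _ p])
        show "1 \<le> k" using k by simp
        have "2 * pdeg M 2 < k * pdeg M 2" using mult_less_mono1[of 2 k "pdeg M 2"] d k by simp
        then show "\<forall>i<3. cmp (tri M (k-1) (k-1) 2) i < k * pdeg M i"
          unfolding all3 cmp_def tri_def using mult_lt_aux[of k 0 "pdeg M 0"] mult_lt_aux[of k 0 "pdeg M 1"] d k by simp
      qed
    qed
  qed
  }
  assume C: "card (gens M) > 3"
  show "\<forall>k\<ge>2. \<not> good (mpow M k)"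
  proof (intro allI impI)
    fix k::nat assume k: "2 \<le> k"
    have "\<not> gens M \<subseteq> {pure 0 (pdeg M 0), pure 1 (pdeg M 1), pure 2 (pdeg M 2)}"
    proof
      assume "gens M \<subseteq> {pure 0 (pdeg M 0), pure 1 (pdeg M 1), pure 2 (pdeg M 2)}"
      then have "card (gens M) \<le> card {pure 0 (pdeg M 0), pure 1 (pdeg M 1), pure 2 (pdeg M 2)}"
        by (rule card_mono[rotated]) simp
      then show False using C card3[of "pure 0 (pdeg M 0)" "pure 1 (pdeg M 1)" "pure 2 (pdeg M 2)"] by simp
    qed
    then obtain g where g: "g \<in> gens M" "g \<noteq> pure 0 (pdeg M 0)" "g \<noteq> pure 1 (pdeg M 1)" "g \<noteq> pure 2 (pdeg M 2)"
      by blast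
    have lt0: "cmp g 0 < pdeg M 0" using gen_lt[OF assms(1) g(1)] g(2) by simp
    have lt1: "cmp g 1 < pdeg M 1" using gen_lt[OF assms(1) g(1)] g(3) by simp
    have lt2: "cmp g 2 < pdeg M 2" using gen_lt[OF assms(1) g(1)] g(4) by simp
    have gM: "g \<in> mpow M 1" using g(1) mpow1[OF mi] by (simp add: gens_def)
    have "madd g (tri M (k-1) (k-1) 1) \<in> mpow M (1 + (k - 1 + (k - 1) + 1))"
      using mpow_madd[OF mi gM tri_in[OF assms(1)]] .
    moreover have eqk: "1 + (k - 1 + (k - 1) + 1) = 2*k" using k by simp
    ultimately have p: "madd g (tri M (k-1) (k-1) 1) \<in> mpow M (2*k)" by (simp only: eqk)
    show "\<not> good (mpow M k)"
    proof (rule bad_crit[OF assms(1) _ p])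
      show "1 \<le> k" using k by simp
      have "2 * pdeg M 2 \<le> k * pdeg M 2" using mult_le_mono1[of 2 k "pdeg M 2"] k by simp
      then have "cmp g 2 + pdeg M 2 < k * pdeg M 2" using lt2 by linarith
      moreover have "cmp (madd g (tri M (k-1) (k-1) 1)) 0 = cmp g 0 + (k-1) * pdeg M 0"
        "cmp (madd g (tri M (k-1) (k-1) 1)) 1 = cmp g 1 + (k-1) * pdeg M 1"
        "cmp (madd g (tri M (k-1) (k-1) 1)) 2 = cmp g 2 + pdeg M 2"
        by (simp_all add: cmp_def tri_def madd_def)
      moreover have "(k-1) * pdeg M 0 + cmp g 0 < k * pdeg M 0" using mult_lt_aux[OF _ lt0] k by simp
      moreover have "(k-1) * pdeg M 1 + cmp g 1 < k * pdeg M 1" using mult_lt_aux[OF _ lt1] k by simp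
      ultimately show "\<forall>i<3. cmp (madd g (tri M (k-1) (k-1) 1)) i < k * pdeg M i"
        unfolding all3 by linarith
    qed
  qed
qed

end
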